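(* Let $\mathbb{I}>0$, $0<c\le1$, and for $\ell>0$ let $g_c(\ell)=4c\ell^2\int_0^\infty u^2\,\Phi\big(-\frac{u\ell\sqrt{c\mathbb{I}}}{2}\big)\phi(u)\,du$. Then $g_c$ is maximized at $\ell_{opt}=\frac{2.426}{\sqrt{c\,\mathbb{I}}}$ (constant to three decimals), and $$\alpha_{opt}=4\int_0^\infty\Phi\Big(-\frac{u\ell_{opt}\sqrt{c\,\mathbb{I}}}{2}\Big)\phi(u)\,du=0.439$$ up to three decimal places.
   Context: $\Phi,\phi$ are the standard normal cdf and density. $g_c$ is the diffusion speed of the limiting diffusion of additive TMCMC-within-Gibbs for i.i.d. product targets (each coordinate updated with probability tending to $c$), $\mathbb{I}=E_f[(f'/f)^2]$ is the Fisher information of the marginal density $f$, and $\alpha_{opt}$ is the corresponding optimal acceptance rate. *)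

theory Defs
  imports "HOL-Probability.Probability"
begin

definition phi :: "real \<Rightarrow> real" where
  "phi x = std_normal_density x"

definition Phi :: "real \<Rightarrow> real" where
  "Phi x = (LBINT t:{..x}. std_normal_density t)"

definition g_speed :: "real \<Rightarrow> real \<Rightarrow> real \<Rightarrow> real" where
  "g_speed I c l = 4 * c * l\<^sup>2 *
     (LBINT u:{0<..}. u\<^sup>2 * Phi (- (u * l * sqrt (c * I) / 2)) * phi u)"

definition accept_rate :: "real \<Rightarrow> real \<Rightarrow> real \<Rightarrow> real" where
  "accept_rate I c l = 4 * (LBINT u:{0<..}. Phi (- (u * l * sqrt (c * I) / 2)) * phi u)"

end

theory Submission imports Defs "HOL-Real_Asymp.Real_Asymp"
begin



lemma phi_eq: "phi x = exp (- x\<^sup>2 / 2) / sqrt (2*pi)"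
  by (simp add: phi_def std_normal_density_def)

lemma phi_prod: "phi (t*u) * phi u = exp (- ((1+t\<^sup>2) * u\<^sup>2 / 2)) / (2*pi)"
proof -
  have s: "sqrt (2*pi) * sqrt (2*pi) = 2*pi" by simp
  have "phi (t*u) * phi u = exp (- (t*u)\<^sup>2 / 2 + - u\<^sup>2 / 2) / (sqrt (2*pi) * sqrt (2*pi))"
    unfolding phi_eq exp_add by simp
  also have "- (t*u)\<^sup>2 / 2 + - u\<^sup>2 / 2 = - ((1+t\<^sup>2) * u\<^sup>2 / 2)"
    by (simp add: power_mult_distrib algebra_simps)
  finally show ?thesis using s by simp
qed

lemma phi_prod1: "u * phi (t*u) * phi u = u * exp (- ((1+t\<^sup>2) * u\<^sup>2 / 2)) / (2*pi)"
  by (simp add: mult.assoc phi_prod)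

lemma phi_prod3: "u^3 * phi (t*u) * phi u = u^3 * exp (- ((1+t\<^sup>2) * u\<^sup>2 / 2)) / (2*pi)"
  by (simp add: mult.assoc phi_prod)

lemma aux_e: fixes q y :: real assumes "q > 0" "y = q - 1"
  shows "inverse q + (1 * q - 2 * y) / q\<^sup>2 = 2/q\<^sup>2"
  using assms by (simp add: field_simps power2_eq_square)

lemma d3: "((\<lambda>t. arctan t + t/(1+t\<^sup>2)) has_real_derivative 2/(1+x\<^sup>2)\<^sup>2) (at x)"
proof -
  have p: "1 + x\<^sup>2 > 0" by (simp add: add_pos_nonneg)
  have g: "((\<lambda>t. 1 + t\<^sup>2) has_real_derivative 2 * x) (at x)"
    by (auto intro!: derivative_eq_intros)
  have q: "((\<lambda>t. t/(1+t\<^sup>2)) has_real_derivative (1 * (1+x\<^sup>2) - 2 * x * x) / (1+x\<^sup>2) ^ Suc (Suc 0)) (at x)"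
    using DERIV_quotient[OF DERIV_ident g] p by (simp only: mult_1_right)
  have e: "inverse (1+x\<^sup>2) + (1 * (1+x\<^sup>2) - 2 * x * x) / (1+x\<^sup>2) ^ Suc (Suc 0) = 2/(1+x\<^sup>2)\<^sup>2"
    using aux_e[OF p, of "x\<^sup>2"] by (simp add: power2_eq_square mult.commute mult.left_commute numeral_2_eq_2)
  show ?thesis using DERIV_add[OF DERIV_arctan q] unfolding e .
qed

lemma lim1: assumes "c > 0" shows "((\<lambda>u::real. - exp (- (c * u\<^sup>2 / 2)) / (2*pi*c)) \<longlongrightarrow> 0) at_top"
  using assms by real_asymp

lemma lim3: assumes "c > 0" shows "((\<lambda>u::real. - ((u\<^sup>2/c + 2/c\<^sup>2) * exp (- (c * u\<^sup>2 / 2))) / (2*pi)) \<longlongrightarrow> 0) at_top"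
  using assms by real_asymp

lemma inner1: "(\<integral>\<^sup>+u. ennreal (u * phi (t*u) * phi u) * indicator {0<..} u \<partial>lborel) = ennreal (1/(2*pi*(1+t\<^sup>2)))"
proof -
  define c where "c = 1 + t\<^sup>2"
  have c: "c > 0" unfolding c_def by (simp add: add_pos_nonneg)
  have "(\<integral>\<^sup>+u. ennreal (u * phi (t*u) * phi u) * indicator {0<..} u \<partial>lborel)
      = (\<integral>\<^sup>+u. ennreal (u * exp (- (c * u\<^sup>2 / 2)) / (2*pi)) * indicator {0..} u \<partial>lborel)"
    by (intro nn_integral_cong) (auto simp: phi_prod1 phi_prod3 c_def split: split_indicator)
  also have "\<dots> = ennreal (0 - (- exp (- (c * 0\<^sup>2 / 2)) / (2*pi*c)))"
  proof (rule nn_integral_FTC_atLeast)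
    show "((\<lambda>u::real. - exp (- (c * u\<^sup>2 / 2)) / (2*pi*c)) \<longlongrightarrow> 0) at_top" using lim1[OF c] .
    fix x :: real assume "0 \<le> x"
    show "0 \<le> x * exp (- (c * x\<^sup>2 / 2)) / (2 * pi)" using \<open>0 \<le> x\<close> by simp
    show "((\<lambda>u. - exp (- (c * u\<^sup>2 / 2)) / (2 * pi * c)) has_real_derivative x * exp (- (c * x\<^sup>2 / 2)) / (2 * pi)) (at x)"
      using c by (auto intro!: derivative_eq_intros simp: field_simps)
  qed measurable
  also have "\<dots> = ennreal (1/(2*pi*(1+t\<^sup>2)))" by (simp add: c_def)
  finally show ?thesis .
qed

lemma inner3: "(\<integral>\<^sup>+u. ennreal (u^3 * phi (t*u) * phi u) * indicator {0<..} u \<partial>lborel) = ennreal (1/(pi*(1+t\<^sup>2)\<^sup>2))"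
proof -
  define c where "c = 1 + t\<^sup>2"
  have c: "c > 0" unfolding c_def by (simp add: add_pos_nonneg)
  have "(\<integral>\<^sup>+u. ennreal (u^3 * phi (t*u) * phi u) * indicator {0<..} u \<partial>lborel)
      = (\<integral>\<^sup>+u. ennreal (u^3 * exp (- (c * u\<^sup>2 / 2)) / (2*pi)) * indicator {0..} u \<partial>lborel)"
    by (intro nn_integral_cong) (auto simp: phi_prod1 phi_prod3 c_def split: split_indicator)
  also have "\<dots> = ennreal (0 - (- ((0\<^sup>2/c + 2/c\<^sup>2) * exp (- (c * 0\<^sup>2 / 2))) / (2*pi)))"
  proof (rule nn_integral_FTC_atLeast)
    show "((\<lambda>u::real. - ((u\<^sup>2/c + 2/c\<^sup>2) * exp (- (c * u\<^sup>2 / 2))) / (2*pi)) \<longlongrightarrow> 0) at_top" using lim3[OF c] .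
    fix x :: real assume "0 \<le> x"
    show "0 \<le> x^3 * exp (- (c * x\<^sup>2 / 2)) / (2 * pi)" using \<open>0 \<le> x\<close> by simp
    show "((\<lambda>u. - ((u\<^sup>2/c + 2/c\<^sup>2) * exp (- (c * u\<^sup>2 / 2))) / (2*pi)) has_real_derivative x^3 * exp (- (c * x\<^sup>2 / 2)) / (2 * pi)) (at x)"
      using c by (auto intro!: derivative_eq_intros simp: field_simps power2_eq_square power3_eq_cube)
  qed measurable
  also have "\<dots> = ennreal (1/(pi*(1+t\<^sup>2)\<^sup>2))" using c by (simp add: c_def power2_eq_square)
  finally show ?thesis .
qed

lemma outer1: "(\<integral>\<^sup>+t. ennreal (1/(2*pi*(1+t\<^sup>2))) * indicator {a..} t \<partial>lborel) = ennreal ((pi/2 - arctan a)/(2*pi))"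
proof -
  have "(\<integral>\<^sup>+t. ennreal (1/(2*pi*(1+t\<^sup>2))) * indicator {a..} t \<partial>lborel) = ennreal ((1/(2*pi)) * (pi/2) - (1/(2*pi)) * arctan a)"
  proof (rule nn_integral_FTC_atLeast)
    show "((\<lambda>t. (1/(2*pi)) * arctan t) \<longlongrightarrow> (1/(2*pi)) * (pi/2)) at_top"
      by (intro tendsto_intros) (simp_all add: tendsto_arctan_at_top)
    fix x :: real
    show "0 \<le> 1/(2*pi*(1+x\<^sup>2))" by (simp add: add_pos_nonneg)
    have eq: "1/(2*pi*(1+x\<^sup>2)) = (1/(2*pi)) * inverse (1+x\<^sup>2)" by (simp add: field_simps)
    show "((\<lambda>t. (1/(2*pi)) * arctan t) has_real_derivative 1/(2*pi*(1+x\<^sup>2))) (at x)"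
      unfolding eq by (rule DERIV_cmult) (rule DERIV_arctan)
  qed measurable
  then show ?thesis by (simp add: field_simps)
qed

lemma outer3: "(\<integral>\<^sup>+t. ennreal (1/(pi*(1+t\<^sup>2)\<^sup>2)) * indicator {a..} t \<partial>lborel) = ennreal ((pi/2 - arctan a - a/(1+a\<^sup>2))/(2*pi))"
proof -
  have "(\<integral>\<^sup>+t. ennreal (1/(pi*(1+t\<^sup>2)\<^sup>2)) * indicator {a..} t \<partial>lborel) = ennreal ((1/(2*pi)) * (pi/2 + 0) - (1/(2*pi)) * (arctan a + a/(1+a\<^sup>2)))"
  proof (rule nn_integral_FTC_atLeast)
    have "((\<lambda>t::real. t/(1+t\<^sup>2)) \<longlongrightarrow> 0) at_top" by real_asymp
    then show "((\<lambda>t. (1/(2*pi)) * (arctan t + t/(1+t\<^sup>2))) \<longlongrightarrow> (1/(2*pi)) * (pi/2 + 0)) at_top"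
      by (intro tendsto_intros) (simp_all add: tendsto_arctan_at_top)
    fix x :: real
    show "0 \<le> 1/(pi*(1+x\<^sup>2)\<^sup>2)" by (simp add: add_pos_nonneg)
    have nz: "1 + x\<^sup>2 \<noteq> 0" by (metis power_one sum_power2_eq_zero_iff zero_neq_one)
    note d = d3[of x]
    have eq: "1/(pi*(1+x\<^sup>2)\<^sup>2) = (1/(2*pi)) * (2/(1+x\<^sup>2)\<^sup>2)" by (simp add: field_simps)
    show "((\<lambda>t. (1/(2*pi)) * (arctan t + t/(1+t\<^sup>2))) has_real_derivative 1/(pi*(1+x\<^sup>2)\<^sup>2)) (at x)"
      unfolding eq by (rule DERIV_cmult) (rule d)
  qed measurable
  then show ?thesis by (simp add: field_simps)
qed



lemma Phi_nn: "ennreal (Phi x) = (\<integral>\<^sup>+t. ennreal (indicator {..x} t * phi t) \<partial>lborel)"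
proof -
  have int: "integrable lborel (\<lambda>t. indicator {..x} t *\<^sub>R std_normal_density t)"
    by (intro integrable_mult_indicator) auto
  then have int': "integrable lborel (\<lambda>t. indicator {..x} t * std_normal_density t)"
    by simp
  show ?thesis
    unfolding Phi_def set_lebesgue_integral_def phi_def real_scaleR_def
    by (rule nn_integral_eq_integral[symmetric]) (use int' in auto)
qed

lemma Phi_nonneg: "Phi x \<ge> 0"
  unfolding Phi_def set_lebesgue_integral_def
  by (intro integral_nonneg_AE) auto

lemma Phi_mono: "mono Phi"
proof
  fix x y :: real assume "x \<le> y"
  have "ennreal (Phi x) \<le> ennreal (Phi y)"
    unfolding Phi_nn using \<open>x \<le> y\<close>
    by (intro nn_integral_mono) (auto simp: phi_def split: split_indicator)
  then show "Phi x \<le> Phi y" using Phi_nonneg[of y] by simp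
qed

lemma Phi_meas[measurable]: "Phi \<in> borel_measurable borel"
  using Phi_mono by (rule borel_measurable_mono)

lemma Phi_rep: assumes u: "u > 0"
  shows "ennreal (Phi (-(a*u))) = (\<integral>\<^sup>+t. ennreal (u * phi (t*u)) * indicator {a..} t \<partial>lborel)"
proof -
  have "ennreal (Phi (-(a*u))) = (\<integral>\<^sup>+t. ennreal (indicator {..-(a*u)} t * phi t) \<partial>lborel)"
    by (rule Phi_nn)
  also have "\<dots> = \<bar>-u\<bar> * (\<integral>\<^sup>+s. ennreal (indicator {..-(a*u)} (0 + (-u) * s) * phi (0 + (-u) * s)) \<partial>lborel)"
    by (rule nn_integral_real_affine) (use u in \<open>auto simp: phi_def\<close>)
  also have "\<dots> = ennreal u * (\<integral>\<^sup>+s. ennreal (phi (s*u)) * indicator {a..} s \<partial>lborel)"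
  proof -
    have e1: "indicator {..-(a*u)} (0 + (-u) * s) = (indicator {a..} s :: real)" for s
      using u by (auto simp: indicator_def mult.commute)
    have e2: "phi (0 + (-u) * s) = phi (s*u)" for s
      by (simp add: phi_def std_normal_density_def mult.commute)
    have "ennreal (indicator {..-(a*u)} (0 + (-u) * s) * phi (0 + (-u) * s)) = ennreal (phi (s*u)) * indicator {a..} s" for s
      unfolding e1 e2 by (simp split: split_indicator)
    then show ?thesis using u by simp
  qed
  also have "\<dots> = (\<integral>\<^sup>+t. ennreal (u * phi (t*u)) * indicator {a..} t \<partial>lborel)"
    using u by (subst nn_integral_cmult[symmetric]) (auto simp: phi_def ennreal_mult mult.assoc)
  finally show ?thesis .
qed


lemma phi_meas[measurable]: "phi \<in> borel_measurable borel"
  unfolding phi_eq by measurable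

lemma A_nn: "(\<integral>\<^sup>+u. ennreal (Phi (-(a*u)) * phi u) * indicator {0<..} u \<partial>lborel) = ennreal ((pi/2 - arctan a)/(2*pi))"
proof -
  let ?f = "\<lambda>u t. ennreal (u * phi (t*u) * phi u) * indicator {0<..} u * indicator {a..} t"
  have "(\<integral>\<^sup>+u. ennreal (Phi (-(a*u)) * phi u) * indicator {0<..} u \<partial>lborel)
      = (\<integral>\<^sup>+u. (\<integral>\<^sup>+t. ennreal (u * phi (t*u)) * indicator {a..} t \<partial>lborel) * ennreal (phi u) * indicator {0<..} u \<partial>lborel)"
  proof (intro nn_integral_cong)
    fix u :: real
    show "ennreal (Phi (-(a*u)) * phi u) * indicator {0<..} u = (\<integral>\<^sup>+t. ennreal (u * phi (t*u)) * indicator {a..} t \<partial>lborel) * ennreal (phi u) * indicator {0<..} u"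
    proof (cases "u > 0")
      case True
      then show ?thesis using Phi_rep[OF True, of a] Phi_nonneg[of "-(a*u)"]
        by (simp add: ennreal_mult phi_def)
    qed simp
  qed
  also have "\<dots> = (\<integral>\<^sup>+u. \<integral>\<^sup>+t. ?f u t \<partial>lborel \<partial>lborel)"
  proof (intro nn_integral_cong)
    fix u :: real
    show "(\<integral>\<^sup>+t. ennreal (u * phi (t*u)) * indicator {a..} t \<partial>lborel) * ennreal (phi u) * indicator {0<..} u = (\<integral>\<^sup>+t. ?f u t \<partial>lborel)"
      by (subst nn_integral_multc[symmetric], simp)+
         (intro nn_integral_cong, auto simp: phi_def ennreal_mult split: split_indicator)
  qed
  also have "\<dots> = (\<integral>\<^sup>+t. \<integral>\<^sup>+u. ?f u t \<partial>lborel \<partial>lborel)"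
    by (rule lborel_pair.Fubini'[symmetric]) measurable
  also have "\<dots> = (\<integral>\<^sup>+t. ennreal (1/(2*pi*(1+t\<^sup>2))) * indicator {a..} t \<partial>lborel)"
  proof (intro nn_integral_cong)
    fix t :: real
    show "(\<integral>\<^sup>+u. ?f u t \<partial>lborel) = ennreal (1/(2*pi*(1+t\<^sup>2))) * indicator {a..} t"
      by (subst inner1[symmetric], subst nn_integral_multc[symmetric]) simp_all
  qed
  also have "\<dots> = ennreal ((pi/2 - arctan a)/(2*pi))" by (rule outer1)
  finally show ?thesis .
qed

lemma B_nn: "(\<integral>\<^sup>+u. ennreal (u\<^sup>2 * Phi (-(a*u)) * phi u) * indicator {0<..} u \<partial>lborel) = ennreal ((pi/2 - arctan a - a/(1+a\<^sup>2))/(2*pi))"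
proof -
  let ?f = "\<lambda>u t. ennreal (u^3 * phi (t*u) * phi u) * indicator {0<..} u * indicator {a..} t"
  have "(\<integral>\<^sup>+u. ennreal (u\<^sup>2 * Phi (-(a*u)) * phi u) * indicator {0<..} u \<partial>lborel)
      = (\<integral>\<^sup>+u. (\<integral>\<^sup>+t. ennreal (u * phi (t*u)) * indicator {a..} t \<partial>lborel) * ennreal (u\<^sup>2 * phi u) * indicator {0<..} u \<partial>lborel)"
  proof (intro nn_integral_cong)
    fix u :: real
    show "ennreal (u\<^sup>2 * Phi (-(a*u)) * phi u) * indicator {0<..} u = (\<integral>\<^sup>+t. ennreal (u * phi (t*u)) * indicator {a..} t \<partial>lborel) * ennreal (u\<^sup>2 * phi u) * indicator {0<..} u"
    proof (cases "u > 0")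
      case True
      then show ?thesis using Phi_rep[OF True, of a] Phi_nonneg[of "-(a*u)"]
        by (simp add: ennreal_mult phi_def mult_ac)
    qed simp
  qed
  also have "\<dots> = (\<integral>\<^sup>+u. \<integral>\<^sup>+t. ?f u t \<partial>lborel \<partial>lborel)"
  proof (intro nn_integral_cong)
    fix u :: real
    show "(\<integral>\<^sup>+t. ennreal (u * phi (t*u)) * indicator {a..} t \<partial>lborel) * ennreal (u\<^sup>2 * phi u) * indicator {0<..} u = (\<integral>\<^sup>+t. ?f u t \<partial>lborel)"
      by (subst nn_integral_multc[symmetric], simp)+
         (intro nn_integral_cong, auto simp: phi_def ennreal_mult[symmetric] power3_eq_cube power2_eq_square mult_ac split: split_indicator)
  qed
  also have "\<dots> = (\<integral>\<^sup>+t. \<integral>\<^sup>+u. ?f u t \<partial>lborel \<partial>lborel)"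
    by (rule lborel_pair.Fubini'[symmetric]) measurable
  also have "\<dots> = (\<integral>\<^sup>+t. ennreal (1/(pi*(1+t\<^sup>2)\<^sup>2)) * indicator {a..} t \<partial>lborel)"
  proof (intro nn_integral_cong)
    fix t :: real
    show "(\<integral>\<^sup>+u. ?f u t \<partial>lborel) = ennreal (1/(pi*(1+t\<^sup>2)\<^sup>2)) * indicator {a..} t"
      by (subst inner3[symmetric], subst nn_integral_multc[symmetric]) simp_all
  qed
  also have "\<dots> = ennreal ((pi/2 - arctan a - a/(1+a\<^sup>2))/(2*pi))" by (rule outer3)
  finally show ?thesis .
qed



definition Dfun :: "real \<Rightarrow> real" where
  "Dfun a = pi/2 - arctan a - a/(1+a\<^sup>2) - a/(1+a\<^sup>2)\<^sup>2"

lemma arctan_shift: assumes "0 \<le> z" "z < 1"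
  shows "arctan ((1+z)/(1-z)) = pi/4 + arctan z"
  using arctan_add[of 1 z] assms by (simp add: arctan_one)

lemma D_lo: "Dfun (4851/4000) > 0"
proof -
  have e: "(4851/4000::real) = (1 + 851/8851)/(1 - 851/8851)" by simp
  have a: "arctan (4851/4000) = pi/4 + arctan (851/8851)"
    unfolding e by (rule arctan_shift) auto
  have b: "arctan (851/8851) \<le> (\<Sum>k<2 * 1 + 1. (- 1) ^ k * (1 / real (k * 2 + 1) * (851/8851::real) ^ (k * 2 + 1)))"
    by (rule arctan_upper_bound) auto
  show ?thesis unfolding Dfun_def a using b pi_approx(1)
    by (simp add: eval_nat_numeral)
qed

lemma D_hi: "Dfun (4853/4000) < 0"
proof -
  have e: "(4853/4000::real) = (1 + 853/8853)/(1 - 853/8853)" by simp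
  have a: "arctan (4853/4000) = pi/4 + arctan (853/8853)"
    unfolding e by (rule arctan_shift) auto
  have b: "(\<Sum>k<2 * 2. (- 1) ^ k * (1 / real (k * 2 + 1) * (853/8853::real) ^ (k * 2 + 1))) \<le> arctan (853/8853)"
    by (rule arctan_lower_bound) auto
  show ?thesis unfolding Dfun_def a using b pi_approx(2)
    by (simp add: eval_nat_numeral)
qed

definition Gfun :: "real \<Rightarrow> real" where
  "Gfun a = pi/2 - arctan a - a/(1+a\<^sup>2)"

definition Hfun :: "real \<Rightarrow> real" where
  "Hfun a = a\<^sup>2 * Gfun a"

lemma dG: "(Gfun has_real_derivative -(2/(1+x\<^sup>2)\<^sup>2)) (at x)"
proof -
  have "Gfun = (\<lambda>t. pi/2 - (arctan t + t/(1+t\<^sup>2)))" by (auto simp: Gfun_def fun_eq_iff)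
  then show ?thesis using DERIV_diff[OF DERIV_const d3, of "pi/2"] by simp
qed

lemma aux4: fixes q x :: real assumes q: "q > 0" and e: "x\<^sup>2 = q - 1"
  shows "(1 * q\<^sup>2 - 4 * x * q * x) / (q\<^sup>2) ^ Suc (Suc 0) = (1 - 3*x\<^sup>2)/q^3"
proof -
  have "1 * q\<^sup>2 - 4 * x * q * x = q\<^sup>2 - 4 * q * x\<^sup>2" by (simp add: power2_eq_square algebra_simps)
  also have "\<dots> = q * (1 - 3*x\<^sup>2)" unfolding e by (simp add: power2_eq_square algebra_simps)
  finally have n: "1 * q\<^sup>2 - 4 * x * q * x = q * (1 - 3*x\<^sup>2)" .
  show ?thesis unfolding n using q by (simp add: field_simps power2_eq_square power3_eq_cube)
qed

lemma d4: "((\<lambda>t. t/(1+t\<^sup>2)\<^sup>2) has_real_derivative (1 - 3*x\<^sup>2)/(1+x\<^sup>2)^3) (at x)"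
proof -
  have p: "1 + x\<^sup>2 > 0" by (simp add: add_pos_nonneg)
  have g: "((\<lambda>t. (1 + t\<^sup>2)\<^sup>2) has_real_derivative 4 * x * (1+x\<^sup>2)) (at x)"
    by (auto intro!: derivative_eq_intros simp: algebra_simps)
  have q: "((\<lambda>t. t/(1+t\<^sup>2)\<^sup>2) has_real_derivative (1 * (1+x\<^sup>2)\<^sup>2 - 4 * x * (1+x\<^sup>2) * x) / ((1+x\<^sup>2)\<^sup>2) ^ Suc (Suc 0)) (at x)"
  proof -
    have nz: "(1+x\<^sup>2)\<^sup>2 \<noteq> 0" using p by simp
    show ?thesis by (rule DERIV_quotient[OF DERIV_ident g nz])
  qed
  have e: "x\<^sup>2 = (1+x\<^sup>2) - 1" by simp
  show ?thesis using q unfolding aux4[OF p e] .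
qed


lemma aux5: fixes q x :: real assumes q: "q > 0" and e: "x\<^sup>2 = q - 1"
  shows "-(2/q\<^sup>2) - (1 - 3*x\<^sup>2)/q^3 = (x\<^sup>2 - 3)/q^3"
proof -
  have "-(2/q\<^sup>2) - (1 - 3*x\<^sup>2)/q^3 = (-2*q - (1 - 3*x\<^sup>2))/q^3"
    using q by (simp add: field_simps power2_eq_square power3_eq_cube)
  also have "-2*q - (1 - 3*x\<^sup>2) = x\<^sup>2 - 3" unfolding e by simp
  finally show ?thesis .
qed

lemma dD: "(Dfun has_real_derivative (x\<^sup>2 - 3)/(1+x\<^sup>2)^3) (at x)"
proof -
  have p: "1 + x\<^sup>2 > 0" by (simp add: add_pos_nonneg)
  have e: "x\<^sup>2 = (1+x\<^sup>2) - 1" by simp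
  have "Dfun = (\<lambda>t. Gfun t - t/(1+t\<^sup>2)\<^sup>2)" by (auto simp: Gfun_def Dfun_def fun_eq_iff)
  then show ?thesis using DERIV_diff[OF dG d4, of x] unfolding aux5[OF p e] by simp
qed

lemma D_antimono: assumes "0 \<le> x" "x \<le> y" "y \<le> 3/2" shows "Dfun y \<le> Dfun x"
proof (rule DERIV_nonpos_imp_nonincreasing[OF assms(2)])
  fix t assume t: "x \<le> t" "t \<le> y"
  have p: "1 + t\<^sup>2 > 0" by (simp add: add_pos_nonneg)
  have "t\<^sup>2 \<le> (3/2)\<^sup>2" using t assms by (intro power_mono) auto
  then have "t\<^sup>2 \<le> 9/4" by (simp add: power2_eq_square)
  then have "(t\<^sup>2 - 3)/(1+t\<^sup>2)^3 \<le> 0" using p by (intro divide_nonpos_pos) auto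
  then show "\<exists>d. (Dfun has_real_derivative d) (at t) \<and> d \<le> 0" using dD by blast
qed

lemma dH: "(Hfun has_real_derivative 2 * x * Dfun x) (at x)"
proof -
  have p: "1 + x\<^sup>2 > 0" by (simp add: add_pos_nonneg)
  have sq: "((\<lambda>t. t\<^sup>2) has_real_derivative 2 * x) (at x)" by (auto intro!: derivative_eq_intros)
  have DG: "Dfun x = Gfun x - x/(1+x\<^sup>2)\<^sup>2" by (simp add: Dfun_def Gfun_def)
  have eq: "2 * x * Gfun x + -(2/(1+x\<^sup>2)\<^sup>2) * x\<^sup>2 = 2 * x * Dfun x"
    unfolding DG using p by (simp add: field_simps power2_eq_square)
  have "Hfun = (\<lambda>t. t\<^sup>2 * Gfun t)" by (auto simp: Hfun_def fun_eq_iff)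
  then show ?thesis using DERIV_mult[OF sq dG] unfolding eq by simp
qed

lemma poly_pos: fixes w :: real assumes "w \<ge> 9/4" shows "5*w^3 - 8*w\<^sup>2 - w - 3 > 0"
proof -
  have "w\<^sup>2 * (5*w - 8) \<ge> w * (9/4) * (13/4)"
  proof -
    have "w\<^sup>2 = w * w" by (simp add: power2_eq_square)
    moreover have "w * w * (5*w - 8) \<ge> w * (9/4) * (13/4)"
    proof -
      have "w * (5*w - 8) \<ge> (9/4) * (13/4)" using assms by (intro mult_mono) auto
      then show ?thesis using assms by (simp add: mult.assoc mult_left_mono)
    qed
    ultimately show ?thesis by simp
  qed
  then show ?thesis using assms by (simp add: power3_eq_cube power2_eq_square algebra_simps)
qed

lemma D_neg: assumes x: "x \<ge> 3/2" shows "Dfun x < 0"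
proof -
  define q where "q = 1 + x\<^sup>2"
  have q: "q > 0" unfolding q_def by (simp add: add_pos_nonneg)
  have xp: "x > 0" using x by simp
  have ai: "arctan (1/x) = pi/2 - arctan x" using arctan_inverse[of x] xp by (simp add: inverse_eq_divide)
  have ub: "arctan (1/x) \<le> (\<Sum>k<2 * 1 + 1. (- 1) ^ k * (1 / real (k * 2 + 1) * (1/x) ^ (k * 2 + 1)))"
    by (rule arctan_upper_bound) (use x in auto)
  then have ub': "arctan (1/x) \<le> 1/x - 1/(3*x^3) + 1/(5*x^5)"
    by (simp add: eval_nat_numeral power_one_over)
  have w: "x\<^sup>2 \<ge> 9/4"
  proof -
    have "(3/2)\<^sup>2 \<le> x\<^sup>2" using x by (intro power_mono) auto
    then show ?thesis by (simp add: power2_eq_square)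
  qed
  have P: "x*(q+1)*(15*x^5) - (15*x^4 - 5*x\<^sup>2 + 3)*q\<^sup>2 = 5*(x\<^sup>2)^3 - 8*(x\<^sup>2)\<^sup>2 - x\<^sup>2 - 3"
    unfolding q_def by algebra
  have C: "(15*x^4 - 5*x\<^sup>2 + 3)*q\<^sup>2 < x*(q+1)*(15*x^5)" using P poly_pos[OF w] by linarith
  have A: "x/q + x/q\<^sup>2 = x*(q+1)/q\<^sup>2" using q by (simp add: field_simps power2_eq_square)
  have B: "1/x - 1/(3*x^3) + 1/(5*x^5) = (15*x^4 - 5*x\<^sup>2 + 3)/(15*x^5)"
    using xp by (simp add: field_simps power2_eq_square eval_nat_numeral)
  have x5: "15*x^5 > 0" using xp by simp
  have q2: "q\<^sup>2 > 0" using q by simp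
  have "(15*x^4 - 5*x\<^sup>2 + 3)/(15*x^5) < x*(q+1)/q\<^sup>2"
    using C x5 q2 by (simp add: divide_less_eq less_divide_eq mult.commute mult.left_commute)
  then have "1/x - 1/(3*x^3) + 1/(5*x^5) < x/q + x/q\<^sup>2" using A B by simp
  then show ?thesis using ub' ai unfolding Dfun_def q_def by linarith
qed

lemma H_opt: assumes s: "0 < s" "s \<le> 3/2" "Dfun s = 0" and a: "a > 0" shows "Hfun a \<le> Hfun s"
proof (cases "a \<le> s")
  case True
  show ?thesis
  proof (rule DERIV_nonneg_imp_nondecreasing[OF True])
    fix t assume t: "a \<le> t" "t \<le> s"
    have "Dfun t \<ge> Dfun s" using t a s by (intro D_antimono) auto
    then have "2 * t * Dfun t \<ge> 0" using t a s by simp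
    then show "\<exists>d. (Hfun has_real_derivative d) (at t) \<and> d \<ge> 0" using dH by blast
  qed
next
  case False
  show ?thesis
  proof (rule DERIV_nonpos_imp_nonincreasing[of s a Hfun])
    show "s \<le> a" using False by simp
    fix t assume t: "s \<le> t" "t \<le> a"
    have "Dfun t \<le> 0"
    proof (cases "t \<le> 3/2")
      case True
      then show ?thesis using D_antimono[of s t] t s by simp
    next
      case False
      then show ?thesis using D_neg[of t] by simp
    qed
    then have "2 * t * Dfun t \<le> 0" using t s by (simp add: mult_nonneg_nonpos)
    then show "\<exists>d. (Hfun has_real_derivative d) (at t) \<and> d \<le> 0" using dH by blast
  qed
qed


lemma acc_bounds: assumes "4851/4000 \<le> s" "s \<le> 4853/4000"
  shows "0.4385 \<le> 4 * ((pi/2 - arctan s)/(2*pi)) \<and> 4 * ((pi/2 - arctan s)/(2*pi)) < 0.4395"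
proof -
  have e0: "(4851/4000::real) = (1 + 851/8851)/(1 - 851/8851)" by simp
  have a0: "arctan (4851/4000) = pi/4 + arctan (851/8851)"
    unfolding e0 by (rule arctan_shift) auto
  have e1: "(4853/4000::real) = (1 + 853/8853)/(1 - 853/8853)" by simp
  have a1: "arctan (4853/4000) = pi/4 + arctan (853/8853)"
    unfolding e1 by (rule arctan_shift) auto
  have u: "arctan (853/8853) \<le> (\<Sum>k<2 * 0 + 1. (- 1) ^ k * (1 / real (k * 2 + 1) * (853/8853::real) ^ (k * 2 + 1)))"
    by (rule arctan_upper_bound) auto
  have l: "(\<Sum>k<2 * 1. (- 1) ^ k * (1 / real (k * 2 + 1) * (851/8851::real) ^ (k * 2 + 1))) \<le> arctan (851/8851)"
    by (rule arctan_lower_bound) auto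
  have u': "arctan (853/8853) \<le> 853/8853" using u by simp
  have l': "851/8851 - (851/8851)^3/3 \<le> arctan (851/8851)" using l by (simp add: eval_nat_numeral)
  have m0: "arctan (4851/4000) \<le> arctan s" using assms by (simp add: arctan_le_iff)
  have m1: "arctan s \<le> arctan (4853/4000)" using assms by (simp add: arctan_le_iff)
  have p1: "3.141592653588 \<le> pi" "pi \<le> 3.1415926535899" using pi_approx by auto
  have eq: "4 * ((pi/2 - arctan s)/(2*pi)) = (pi - 2 * arctan s)/pi" by (simp add: field_simps)
  have "0.4385 * pi \<le> pi - 2 * arctan s" using m1 a1 u' p1 by simp
  moreover have "pi - 2 * arctan s < 0.4395 * pi" using m0 a0 l' p1 by (simp add: power3_eq_cube)
  ultimately show ?thesis unfolding eq by (simp add: le_divide_eq divide_less_eq)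
qed


lemma G_nonneg: fixes a :: real assumes "0 \<le> a" shows "0 \<le> pi/2 - arctan a - a/(1+a\<^sup>2)"
proof (cases "a \<le> 1")
  case True
  have at: "arctan a \<le> pi/4" using arctan_monotone'[OF True] by (simp add: arctan_one)
  have q: "1 + a\<^sup>2 > 0" by (simp add: add_pos_nonneg)
  have "2 * a \<le> 1 + a\<^sup>2" using zero_le_power2[of "a - 1"] by (simp add: power2_eq_square algebra_simps)
  then have "a/(1+a\<^sup>2) \<le> 1/2" using q by (simp add: divide_le_eq)
  then show ?thesis using at pi_gt3 by linarith
next
  case False
  then have ap: "a > 1" by simp
  have ai: "arctan (1/a) = pi/2 - arctan a" using arctan_inverse[of a] ap by (simp add: inverse_eq_divide)
  have lb: "(\<Sum>k<2 * 1. (- 1) ^ k * (1 / real (k * 2 + 1) * (1/a) ^ (k * 2 + 1))) \<le> arctan (1/a)"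
    by (rule arctan_lower_bound) (use ap in auto)
  then have lb': "1/a - 1/(3*a^3) \<le> arctan (1/a)" by (simp add: eval_nat_numeral power_one_over)
  have q: "1 + a\<^sup>2 > 0" by (simp add: add_pos_nonneg)
  have "a/(1+a\<^sup>2) \<le> 1/a - 1/(3*a^3)"
  proof -
    have e: "1/a - 1/(3*a^3) = (3*a\<^sup>2 - 1)/(3*a^3)" using ap by (simp add: field_simps power2_eq_square power3_eq_cube)
    have "a * (3*a^3) \<le> (3*a\<^sup>2 - 1) * (1+a\<^sup>2)"
    proof -
      have "(3*a\<^sup>2 - 1) * (1+a\<^sup>2) - a * (3*a^3) = 2*a\<^sup>2 - 1" by (simp add: power2_eq_square power3_eq_cube algebra_simps)
      moreover have "a\<^sup>2 \<ge> 1" using ap by simp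
      ultimately show ?thesis by linarith
    qed
    then show ?thesis unfolding e using q ap by (simp add: divide_le_eq le_divide_eq mult.commute)
  qed
  then show ?thesis using lb' ai by linarith
qed

lemma A_int: "(LBINT u:{0<..}. Phi (-(a*u)) * phi u) = (pi/2 - arctan a)/(2*pi)"
proof -
  have nn: "(\<integral>\<^sup>+u. ennreal (indicator {0<..} u *\<^sub>R (Phi (-(a*u)) * phi u)) \<partial>lborel) = ennreal ((pi/2 - arctan a)/(2*pi))"
    unfolding A_nn[symmetric] by (intro nn_integral_cong) (simp split: split_indicator)
  have "has_bochner_integral lborel (\<lambda>u. indicator {0<..} u *\<^sub>R (Phi (-(a*u)) * phi u)) ((pi/2 - arctan a)/(2*pi))"
  proof (rule has_bochner_integral_nn_integral[OF _ _ _ nn])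
    show "0 \<le> (pi/2 - arctan a)/(2*pi)" using arctan_ubound[of a] by simp
    show "AE x in lborel. 0 \<le> indicator {0<..} x *\<^sub>R (Phi (- (a * x)) * phi x)"
      using Phi_nonneg by (auto simp: phi_def)
  qed measurable
  then show ?thesis unfolding set_lebesgue_integral_def by (rule has_bochner_integral_integral_eq)
qed

lemma B_int: assumes "0 \<le> a"
  shows "(LBINT u:{0<..}. u\<^sup>2 * Phi (-(a*u)) * phi u) = (pi/2 - arctan a - a/(1+a\<^sup>2))/(2*pi)"
proof -
  have nn: "(\<integral>\<^sup>+u. ennreal (indicator {0<..} u *\<^sub>R (u\<^sup>2 * Phi (-(a*u)) * phi u)) \<partial>lborel) = ennreal ((pi/2 - arctan a - a/(1+a\<^sup>2))/(2*pi))"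
    unfolding B_nn[symmetric] by (intro nn_integral_cong) (simp split: split_indicator)
  have "has_bochner_integral lborel (\<lambda>u. indicator {0<..} u *\<^sub>R (u\<^sup>2 * Phi (-(a*u)) * phi u)) ((pi/2 - arctan a - a/(1+a\<^sup>2))/(2*pi))"
  proof (rule has_bochner_integral_nn_integral[OF _ _ _ nn])
    show "0 \<le> (pi/2 - arctan a - a/(1+a\<^sup>2))/(2*pi)" using G_nonneg[OF assms] by simp
    show "AE x in lborel. 0 \<le> indicator {0<..} x *\<^sub>R (x\<^sup>2 * Phi (- (a * x)) * phi x)"
      using Phi_nonneg by (auto simp: phi_def)
  qed measurable
  then show ?thesis unfolding set_lebesgue_integral_def by (rule has_bochner_integral_integral_eq)
qed

lemma acc_formula: "accept_rate I c l = 4 * ((pi/2 - arctan (l * sqrt (c*I) / 2))/(2*pi))"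
proof -
  have e: "\<And>u. u * l * sqrt (c * I) / 2 = (l * sqrt (c*I) / 2) * u" by simp
  show ?thesis unfolding accept_rate_def e A_int ..
qed

lemma g_formula: assumes "0 \<le> l * sqrt (c*I) / 2"
  shows "g_speed I c l = 4 * c * l\<^sup>2 * ((pi/2 - arctan (l * sqrt (c*I) / 2) - (l * sqrt (c*I) / 2)/(1+(l * sqrt (c*I) / 2)\<^sup>2))/(2*pi))"
proof -
  have e: "\<And>u. u * l * sqrt (c * I) / 2 = (l * sqrt (c*I) / 2) * u" by simp
  show ?thesis unfolding g_speed_def e B_int[OF assms] ..
qed

theorem corollary2:
  "\<exists>k::real. 2.4255 \<le> k \<and> k < 2.4265 \<and>
     (\<forall>I c::real. I > 0 \<longrightarrow> 0 < c \<longrightarrow> c \<le> 1 \<longrightarrow>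
        (let l_opt = k / sqrt (c * I) in
           (\<forall>l>0. g_speed I c l \<le> g_speed I c l_opt) \<and>
           0.4385 \<le> accept_rate I c l_opt \<and> accept_rate I c l_opt < 0.4395))"
proof -
  have cont: "continuous_on {4851/4000..4853/4000} Dfun"
    using dD by (intro continuous_at_imp_continuous_on ballI DERIV_isCont) blast
  obtain as where as: "4851/4000 \<le> as" "as \<le> 4853/4000" "Dfun as = 0"
  proof -
    have "\<exists>x. 4851/4000 \<le> x \<and> x \<le> 4853/4000 \<and> Dfun x = 0"
      by (rule IVT2') (use D_hi D_lo cont in auto)
    then show ?thesis using that by blast
  qed
  have as2: "as < 4853/4000" using as D_hi by (cases "as = 4853/4000") auto
  show ?thesis
  proof (intro exI[of _ "2*as"] conjI allI impI)
    show "2.4255 \<le> 2*as" using as by simp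
    show "2*as < 2.4265" using as2 by simp
    fix I c :: real assume I: "I > 0" and c: "0 < c" and c1: "c \<le> 1"
    define s where "s = sqrt (c*I)"
    have s: "s > 0" unfolding s_def using I c by simp
    have s2: "s\<^sup>2 = c*I" unfolding s_def using I c by simp
    have aopt: "(2*as/s) * sqrt (c*I) / 2 = as" using s unfolding s_def[symmetric] by simp
    have asp: "0 < as" "as \<le> 3/2" using as by auto
    have gH: "g_speed I c l = (8/(pi*I)) * Hfun (l * s / 2)" if l: "l > 0" for l
    proof -
      define a where "a = l * s / 2"
      have a0: "0 \<le> a" unfolding a_def using l s by simp
      have "g_speed I c l = 4 * c * l\<^sup>2 * ((pi/2 - arctan a - a/(1+a\<^sup>2))/(2*pi))"
        using g_formula[of l c I] a0 unfolding a_def s_def by simp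
      also have "4 * c * l\<^sup>2 = 16 * a\<^sup>2 / I"
        unfolding a_def using I s2 by (simp add: power_mult_distrib power_divide field_simps)
      also have "16 * a\<^sup>2 / I * ((pi/2 - arctan a - a/(1+a\<^sup>2))/(2*pi)) = (8/(pi*I)) * Hfun a"
        unfolding Hfun_def Gfun_def using I by (simp add: field_simps)
      finally show ?thesis unfolding a_def .
    qed
    show "let l_opt = 2*as / sqrt (c * I) in
           (\<forall>l>0. g_speed I c l \<le> g_speed I c l_opt) \<and>
           0.4385 \<le> accept_rate I c l_opt \<and> accept_rate I c l_opt < 0.4395"
      unfolding Let_def s_def[symmetric]
    proof (intro conjI allI impI)
      have lo: "2*as/s > 0" using s asp by simp
      have aopt': "(2*as/s) * s / 2 = as" using s by simp
      fix l :: real assume l: "l > 0"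
      have "Hfun (l * s / 2) \<le> Hfun as" using H_opt[OF asp(1) asp(2) as(3)] l s by simp
      then show "g_speed I c l \<le> g_speed I c (2*as/s)"
        unfolding gH[OF l] gH[OF lo] aopt' using I by (intro mult_left_mono) auto
    next
      have "accept_rate I c (2*as/s) = 4 * ((pi/2 - arctan as)/(2*pi))"
        unfolding acc_formula s_def[symmetric] using s by simp
      then show "0.4385 \<le> accept_rate I c (2*as/s)" "accept_rate I c (2*as/s) < 0.4395"
        using acc_bounds[OF as(1) as(2)] by auto
    qed
  qed
qed

end
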